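(* Fix $n\ge1$ and let $\mathcal Z_n=\{H\in\mathcal H: X_n(H)=0\}$ be the zero set of $X_n$, i.e. the set of $H\in\mathcal H$ satisfying $$H^{(k+n)}-H^{(k)}H^{(n)}+\sum_{l=1}^{k}H^n_lH^{(k-l)}+\sum_{l=1}^{n}H^k_lH^{(n-l)}=0\quad\text{for all }k\ge0.$$ Then (i) every vector field $X_j$, $j\ge1$, is tangent to $\mathcal Z_n$; (ii) at every point of $\mathcal Z_n$ one has $\frac{\partial H^{(n)}}{\partial t_j}=0$ for all $j\ge1$; consequently (iii) the set $\mathcal S_n=\{H\in\mathcal Z_n: H^{(n)}=z^n\}$ is also invariant under all the flows $X_j$.
   Context: Let $z$ be a formal variable and $\mathcal L$ the space of formal Laurent series $\sum_{j\le N} l_j z^j$ (finitely many positive powers of $z$). Let $\mathcal H$ be the set of sequences $H=(H^{(k)})_{k\ge0}$ of elements of $\mathcal L$ with $H^{(0)}=1$ and, for $k\ge1$, $H^{(k)}=z^k+\sum_{l\ge1}H^k_l z^{-l}$; the coefficients $H^k_l$ are coordinates on $\mathcal H$, and we set $H^0_l=0$. The central system (CS) is the family of vector fields $X_j$, $j\ge1$, on $\mathcal H$, with associated times $t_j$, defined by $$\frac{\partial H^{(k)}}{\partial t_j}=H^{(j+k)}-H^{(j)}H^{(k)}+\sum_{l=1}^{k}H^j_lH^{(k-l)}+\sum_{l=1}^{j}H^k_lH^{(j-l)},\qquad k\ge0;$$ the right-hand side contains only negative powers of $z$, so this determines the components $X_j(H^k_l)$. *)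

theory Defs
  imports "HOL-Analysis.Analysis" "HOL-Computational_Algebra.Formal_Laurent_Series"
begin

text \<open>
A point H of the space \<H> is encoded by its coordinates h k l = H^k_l (k,l \<ge> 1), as a function
h :: nat \<Rightarrow> nat \<Rightarrow> complex. Entries with k = 0 or l = 0 are ignored (convention H^0_l = 0).
Laurent series in z with finitely many positive powers are represented as library Laurent
series (finitely many negative powers) in the variable w = z^{-1}; thus the coefficient of
z^m is the coefficient of w^(-m).
\<close>

definition coord :: "(nat \<Rightarrow> nat \<Rightarrow> complex) \<Rightarrow> nat \<Rightarrow> nat \<Rightarrow> complex" where
  "coord h k l = (if k = 0 \<or> l = 0 then 0 else h k l)"

definition Hser :: "(nat \<Rightarrow> nat \<Rightarrow> complex) \<Rightarrow> nat \<Rightarrow> complex fls" where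
  "Hser h k = (if k = 0 then 1
     else fls_X_intpow (- int k) + fps_to_fls (Abs_fps (\<lambda>l. coord h k l)))"

text \<open>Right-hand side of the central system: dH^{(k)}/dt_j.\<close>
definition CSrhs :: "nat \<Rightarrow> nat \<Rightarrow> (nat \<Rightarrow> nat \<Rightarrow> complex) \<Rightarrow> complex fls" where
  "CSrhs j k h = Hser h (j + k) - Hser h j * Hser h k
     + (\<Sum>l = 1..k. fls_const (coord h j l) * Hser h (k - l))
     + (\<Sum>l = 1..j. fls_const (coord h k l) * Hser h (j - l))"

text \<open>Components X_j(H^k_l) of the vector field X_j at h: coefficient of z^{-l} = w^l.\<close>
definition Xfield :: "nat \<Rightarrow> (nat \<Rightarrow> nat \<Rightarrow> complex) \<Rightarrow> nat \<Rightarrow> nat \<Rightarrow> complex" where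
  "Xfield j h k l = (if 1 \<le> k \<and> 1 \<le> l then fls_nth (CSrhs j k h) (int l) else 0)"

definition Zset :: "nat \<Rightarrow> (nat \<Rightarrow> nat \<Rightarrow> complex) set" where
  "Zset n = {h. \<forall>k. CSrhs n k h = 0}"

definition Sset :: "nat \<Rightarrow> (nat \<Rightarrow> nat \<Rightarrow> complex) set" where
  "Sset n = {h \<in> Zset n. Hser h n = fls_X_intpow (- int n)}"

text \<open>Derivative of a (polynomial) function F of the coordinates along the vector field X_j at h:
X_j(F)(h) is the derivative at e = 0 of e \<mapsto> F(h + e X_j(h)).\<close>
definition tangent_at :: "nat \<Rightarrow> ('i \<Rightarrow> (nat \<Rightarrow> nat \<Rightarrow> complex) \<Rightarrow> complex)
     \<Rightarrow> (nat \<Rightarrow> nat \<Rightarrow> complex) \<Rightarrow> bool" where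
  "tangent_at j F h = (\<forall>i. ((\<lambda>e. F i (\<lambda>a b. h a b + e * Xfield j h a b))
                               has_field_derivative 0) (at 0))"

definition Zeqs :: "nat \<Rightarrow> nat \<times> int \<Rightarrow> (nat \<Rightarrow> nat \<Rightarrow> complex) \<Rightarrow> complex" where
  "Zeqs n = (\<lambda>(k, m) h. fls_nth (CSrhs n k h) m)"

definition Seqs :: "nat \<Rightarrow> (nat \<times> int) + int \<Rightarrow> (nat \<Rightarrow> nat \<Rightarrow> complex) \<Rightarrow> complex" where
  "Seqs n = (\<lambda>x h. case x of Inl km \<Rightarrow> Zeqs n km h
                         | Inr m \<Rightarrow> fls_nth (Hser h n - fls_X_intpow (- int n)) m)"

end

theory Submission
  imports Defs
begin

definition SS :: "nat \<Rightarrow> (nat \<Rightarrow> complex fls) \<Rightarrow> complex fls \<Rightarrow> complex fls" where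
  "SS B E f = (\<Sum>m\<le>B. fls_const (fls_nth f (- int m)) * E m)"

definition lowb :: "nat \<Rightarrow> complex fls \<Rightarrow> bool" where
  "lowb N f = (\<forall>i. i < - int N \<longrightarrow> fls_nth f i = 0)"

lemma fls_const_add': "fls_const (a + b) = fls_const a + (fls_const b :: complex fls)"
  by (intro fls_eqI) simp

lemma SS_add: "SS B E (f + g) = SS B E f + SS B E g"
  by (simp add: SS_def fls_const_add' distrib_right sum.distrib)

lemma SS_diff: "SS B E (f - g) = SS B E f - SS B E g"
proof -
  have "fls_const (a - b) = fls_const a - (fls_const b :: complex fls)" for a b
    by (intro fls_eqI) simp
  then show ?thesis by (simp add: SS_def left_diff_distrib sum_subtractf)
qed

lemma SS_cmult: "SS B E (fls_const c * f) = fls_const c * SS B E f"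
proof -
  have "fls_const (a * b) = fls_const a * (fls_const b :: complex fls)" for a b
    by (simp add: fls_const_mult_const)
  then show ?thesis by (simp only: SS_def sum_distrib_left mult.assoc fls_mult_const_nth)
qed

lemma SS_sum: "finite S \<Longrightarrow> SS B E (\<Sum>m\<in>S. fls_const (c m) * G m) = (\<Sum>m\<in>S. fls_const (c m) * SS B E (G m))"
  by (induction S rule: finite_induct) (simp_all add: SS_add SS_cmult, simp add: SS_def)

lemma SS_mono: assumes "lowb N f" "N \<le> B" shows "SS B E f = SS N E f"
  unfolding SS_def
  by (rule sum.mono_neutral_right) (use assms in \<open>auto simp: lowb_def\<close>)

lemma Hser_nth: "fls_nth (Hser h k) i = (if i = - int k then 1 else 0) + (if i < 0 then 0 else coord h k (nat i))"
  by (auto simp: Hser_def coord_def)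

definition HH :: "nat \<Rightarrow> (nat \<Rightarrow> nat \<Rightarrow> complex) \<Rightarrow> complex fls \<Rightarrow> complex fls" where
  "HH B h f = SS B (Hser h) f"

lemma Hser_nth_nonpos: "fls_nth (Hser h k) (- int m) = (if m = k then 1 else 0)"
  by (simp add: Hser_nth coord_def)

lemma HH_nth_le: "m \<le> B \<Longrightarrow> fls_nth (HH B h f) (- int m) = fls_nth f (- int m)"
proof -
  assume "m \<le> B"
  have "fls_nth (HH B h f) (- int m) = (\<Sum>ma\<le>B. if m = ma then fls_nth f (- int ma) else 0)"
    unfolding HH_def SS_def fls_nth_sum by (rule sum.cong) (simp_all add: Hser_nth_nonpos)
  then show ?thesis using \<open>m \<le> B\<close> by simp
qed

lemma HH_nth_gt: "B < m \<Longrightarrow> fls_nth (HH B h f) (- int m) = 0"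
proof -
  assume "B < m"
  have "fls_nth (HH B h f) (- int m) = (\<Sum>ma\<le>B. if m = ma then fls_nth f (- int ma) else 0)"
    unfolding HH_def SS_def fls_nth_sum by (rule sum.cong) (simp_all add: Hser_nth_nonpos)
  then show ?thesis using \<open>B < m\<close> by simp
qed

lemma HH_cong: "(\<And>m. m \<le> B \<Longrightarrow> fls_nth f (- int m) = fls_nth g (- int m)) \<Longrightarrow> HH B h f = HH B h g"
  by (simp add: HH_def SS_def)

lemma HH_idem: "HH B h (HH B h f) = HH B h f"
  by (rule HH_cong) (simp add: HH_nth_le)

lemma lowb_Hser: "lowb k (Hser h k)"
  by (simp add: lowb_def Hser_nth)

lemma lowb_mult: assumes "lowb a f" "lowb b g" shows "lowb (a+b) (f*g)"
proof (cases "f = 0 \<or> g = 0")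
  case True then show ?thesis by (auto simp: lowb_def)
next
  case False
  have "- int a \<le> fls_subdegree f" using False assms(1) by (intro fls_subdegree_geI) (auto simp: lowb_def)
  moreover have "- int b \<le> fls_subdegree g" using False assms(2) by (intro fls_subdegree_geI) (auto simp: lowb_def)
  ultimately show ?thesis unfolding lowb_def by (auto intro!: fls_times_nth_eq0)
qed

lemma lowb_add: "lowb a f \<Longrightarrow> lowb a g \<Longrightarrow> lowb a (f+g)"
  by (simp add: lowb_def)
lemma lowb_diff: "lowb a f \<Longrightarrow> lowb a g \<Longrightarrow> lowb a (f-g)"
  by (simp add: lowb_def)
lemma lowb_mono: "lowb a f \<Longrightarrow> a \<le> b \<Longrightarrow> lowb b f"
  by (simp add: lowb_def)
lemma lowb_cmult: "lowb a f \<Longrightarrow> lowb a (fls_const c * f)"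
  by (simp add: lowb_def)
lemma lowb_sum: "(\<And>m. m \<in> S \<Longrightarrow> lowb a (E m)) \<Longrightarrow> lowb a (\<Sum>m\<in>S. E m)"
  by (simp add: lowb_def fls_nth_sum)
lemma lowb_HH: "lowb B (HH B h f)"
  unfolding HH_def SS_def
  by (intro lowb_sum lowb_cmult) (auto intro: lowb_mono lowb_Hser)

lemma Hser_alt: "Hser h k = fls_shift (int k) 1 + fps_to_fls (Abs_fps (coord h k))"
  by (intro fls_eqI) (simp add: Hser_nth coord_def)

lemma shift1_mult: "fls_shift a 1 * f = fls_shift a (f :: complex fls)" "f * fls_shift a 1 = fls_shift a f"
  using fls_X_intpow_times_conv_shift[where i="-a" and f=f] by simp_all

lemma prod_nth: "fls_nth (Hser h j * Hser h k) (- int m) =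
   (if m = j+k then 1 else 0) + (if m < j then coord h k (j-m) else 0) + (if m < k then coord h j (k-m) else 0)"
proof -
  let ?A = "Abs_fps (coord h j)" and ?B = "Abs_fps (coord h k)"
  have e: "Hser h j * Hser h k = fls_shift (int j + int k) 1 + fls_shift (int j) (fps_to_fls ?B)
     + fls_shift (int k) (fps_to_fls ?A) + fps_to_fls (?A * ?B)"
    unfolding Hser_alt fls_times_fps_to_fls
    by (simp add: algebra_simps shift1_mult)
  have z: "fls_nth (fps_to_fls (?A * ?B)) (- int m) = 0"
    by (simp add: fps_mult_nth_0 coord_def)
  show ?thesis unfolding e using z
    by (auto simp: coord_def nat_diff_distrib)
qed

lemma reidx: fixes a N :: nat assumes "a \<le> N"
  shows "(\<Sum>m\<le>N. fls_const (if m < a then c (a-m) else 0) * E m) = (\<Sum>l=1..a. fls_const (c l) * (E (a-l) :: complex fls))"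
proof -
  have "(\<Sum>m\<le>N. fls_const (if m < a then c (a-m) else 0) * E m) = (\<Sum>m\<in>{..<a}. fls_const (if m < a then c (a-m) else 0) * E m)"
    using assms by (intro sum.mono_neutral_right) auto
  also have "\<dots> = (\<Sum>m\<in>{..<a}. fls_const (c (a-m)) * E m)"
    by (rule sum.cong) auto
  also have "\<dots> = (\<Sum>l=1..a. fls_const (c l) * (E (a-l)))"
    by (rule sum.reindex_bij_witness[where i="\<lambda>l. a - l" and j="\<lambda>m. a - m"]) auto
  finally show ?thesis .
qed

lemma F1: assumes "j + k \<le> B"
  shows "CSrhs j k h = HH B h (Hser h j * Hser h k) - Hser h j * Hser h k"
proof -
  let ?P = "Hser h j * Hser h k"
  have lp: "lowb (j+k) ?P" by (intro lowb_mult lowb_Hser)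
  have "HH B h ?P = HH (j+k) h ?P" unfolding HH_def using SS_mono[OF lp assms] .
  also have "\<dots> = (\<Sum>m\<le>j+k. fls_const (if m = j+k then 1 else 0) * Hser h m)
       + (\<Sum>m\<le>j+k. fls_const (if m < j then coord h k (j-m) else 0) * Hser h m)
       + (\<Sum>m\<le>j+k. fls_const (if m < k then coord h j (k-m) else 0) * Hser h m)"
    unfolding HH_def SS_def prod_nth fls_const_add' distrib_right sum.distrib ..
  also have "\<dots> = Hser h (j+k) + (\<Sum>l=1..j. fls_const (coord h k l) * Hser h (j-l))
     + (\<Sum>l=1..k. fls_const (coord h j l) * Hser h (k-l))"
  proof -
    have "(\<Sum>m\<le>j+k. fls_const (if m = j+k then 1 else 0) * Hser h m) = (\<Sum>m\<le>j+k. if m = j+k then Hser h m else 0)"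
      by (rule sum.cong) auto
    then show ?thesis by (simp add: reidx)
  qed
  finally show ?thesis unfolding CSrhs_def by simp
qed

lemma CS_sym: "CSrhs j k h = CSrhs k j h"
  unfolding CSrhs_def by (simp add: add.commute mult.commute add_ac)

lemma HH_add: "HH B h (f + g) = HH B h f + HH B h g" by (simp add: HH_def SS_add)
lemma HH_diff: "HH B h (f - g) = HH B h f - HH B h g" by (simp add: HH_def SS_diff)
lemma HH_cmult: "HH B h (fls_const c * f) = fls_const c * HH B h f" by (simp add: HH_def SS_cmult)
lemma HH_sum: "finite S \<Longrightarrow> HH B h (\<Sum>m\<in>S. fls_const (c m) * G m) = (\<Sum>m\<in>S. fls_const (c m) * HH B h (G m))"
  by (simp add: HH_def SS_sum)

lemma CS0: "CSrhs j 0 h = 0"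
  by (simp add: CSrhs_def Hser_def coord_def)

lemma CS_nonpos: assumes "i \<le> 0" shows "fls_nth (CSrhs j k h) i = 0"
proof -
  obtain m where m: "i = - int m" using assms by (metis minus_minus nonneg_int_cases neg_0_le_iff_le)
  let ?P = "Hser h j * Hser h k"
  have lp: "lowb (j+k) ?P" by (intro lowb_mult lowb_Hser)
  show ?thesis
  proof (cases "m \<le> j + k")
    case True then show ?thesis unfolding m F1[OF order_refl] by (simp add: HH_nth_le)
  next
    case False then show ?thesis using lp unfolding m F1[OF order_refl] by (simp add: HH_nth_gt lowb_def)
  qed
qed

lemma lowb0_CS: "lowb 0 (CSrhs j k h)"
  by (simp add: lowb_def CS_nonpos)

lemma Hser_pert: "Hser (\<lambda>a b. h a b + e * Xfield j h a b) k = Hser h k + fls_const e * CSrhs j k h"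
proof (rule fls_eqI)
  fix i
  show "fls_nth (Hser (\<lambda>a b. h a b + e * Xfield j h a b) k) i = fls_nth (Hser h k + fls_const e * CSrhs j k h) i"
  proof (cases "i \<le> 0")
    case True then show ?thesis by (simp add: Hser_nth CS_nonpos coord_def)
  next
    case False
    then show ?thesis by (cases "k = 0") (simp_all add: Hser_nth CS0 coord_def Xfield_def)
  qed
qed

lemma HH_pert: "HH B (\<lambda>a b. h a b + e * Xfield j h a b) f = HH B h f + fls_const e * SS B (\<lambda>m. CSrhs j m h) f"
  unfolding HH_def SS_def Hser_pert by (simp add: distrib_left sum.distrib sum_distrib_left mult_ac)

lemma expansion:
  fixes h :: "nat \<Rightarrow> nat \<Rightarrow> complex" and n k j :: nat and e :: complex
  defines "A \<equiv> Hser h n * Hser h k"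
  defines "Bt \<equiv> CSrhs j n h * Hser h k + Hser h n * CSrhs j k h"
  defines "Cc \<equiv> CSrhs j n h * CSrhs j k h"
  defines "Q \<equiv> \<lambda>m. CSrhs j m h"
  shows "CSrhs n k (\<lambda>a b. h a b + e * Xfield j h a b) =
    (HH (n+k) h A - A) + fls_const e * (SS (n+k) Q A + HH (n+k) h Bt - Bt)
    + fls_const e * (fls_const e * (SS (n+k) Q Bt + HH (n+k) h Cc - Cc))
    + fls_const e * (fls_const e * (fls_const e * SS (n+k) Q Cc))"
proof -
  have p: "Hser (\<lambda>a b. h a b + e * Xfield j h a b) n * Hser (\<lambda>a b. h a b + e * Xfield j h a b) k
     = A + fls_const e * Bt + fls_const e * (fls_const e * Cc)"
    unfolding Hser_pert A_def Bt_def Cc_def by (simp add: algebra_simps)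
  show ?thesis
    unfolding F1[OF order_refl, of n k] p HH_pert Q_def[symmetric]
    by (simp only: HH_add HH_cmult SS_add SS_cmult) (simp add: algebra_simps)
qed

lemma deriv_cubic: "((\<lambda>e::complex. c0 + e * c1 + e * (e * c2) + e * (e * (e * c3))) has_field_derivative c1) (at 0)"
  by (auto intro!: derivative_eq_intros)

lemma C1_zero:
  fixes h :: "nat \<Rightarrow> nat \<Rightarrow> complex" and n k j :: nat
  assumes Z: "\<And>m. CSrhs n m h = 0"
  defines "A \<equiv> Hser h n * Hser h k"
  defines "Bt \<equiv> CSrhs j n h * Hser h k + Hser h n * CSrhs j k h"
  defines "Q \<equiv> \<lambda>m. CSrhs j m h"
  shows "SS (n+k) Q A + HH (n+k) h Bt - Bt = 0"
proof -
  define L where "L = n + j + k"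
  define Hj where "Hj = Hser h j"
  define Hn where "Hn = Hser h n"
  have Qn: "CSrhs j n h = 0" using Z[of j] CS_sym[of j n h] by simp
  have Bt: "Bt = Hn * CSrhs j k h" unfolding Bt_def Qn Hn_def by simp
  have HA: "HH (n+k) h A = A" using Z[of k] F1[OF order_refl, of n k h] unfolding A_def by simp
  have ZL: "HH L h (Hn * Hser h m) = Hn * Hser h m" if "m \<le> j + k" for m
    using Z[of m] F1[of n m L h] that unfolding L_def Hn_def by simp
  have c: "SS (n+k) Q A = HH L h (Hj * A) - Hj * A"
  proof -
    have "SS (n+k) Q A = (\<Sum>m\<le>n+k. fls_const (fls_nth A (- int m)) * (HH L h (Hj * Hser h m) - Hj * Hser h m))"
      unfolding SS_def Q_def by (rule sum.cong) (simp_all add: F1 L_def Hj_def)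
    also have "\<dots> = HH L h (\<Sum>m\<le>n+k. fls_const (fls_nth A (- int m)) * (Hj * Hser h m))
        - (\<Sum>m\<le>n+k. fls_const (fls_nth A (- int m)) * (Hj * Hser h m))"
      by (simp add: HH_sum right_diff_distrib sum_subtractf)
    also have "(\<Sum>m\<le>n+k. fls_const (fls_nth A (- int m)) * (Hj * Hser h m)) = Hj * HH (n+k) h A"
      unfolding HH_def SS_def by (simp add: sum_distrib_left mult_ac)
    finally show ?thesis unfolding HA .
  qed
  define G where "G = HH (j+k) h (Hj * Hser h k)"
  have Qk: "CSrhs j k h = G - Hj * Hser h k" unfolding G_def Hj_def by (rule F1) simp
  have lBt: "lowb n Bt" unfolding Bt using lowb_mult[OF lowb_Hser[where h=h and k=n] lowb0_CS[where j=j and k=k and h=h]] by (simp add: Hn_def)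
  have d: "HH (n+k) h Bt = HH L h Bt"
    unfolding HH_def using SS_mono[OF lBt, of "n+k"] SS_mono[OF lBt, of L] by (simp add: L_def)
  have e: "HH L h (Hn * G) = Hn * G"
  proof -
    have "Hn * G = (\<Sum>m\<le>j+k. fls_const (fls_nth (Hj * Hser h k) (- int m)) * (Hn * Hser h m))"
      unfolding G_def HH_def SS_def by (simp add: sum_distrib_left mult_ac)
    also have "HH L h \<dots> = \<dots>"
      by (simp add: HH_sum ZL)
    finally show ?thesis
      by (simp add: \<open>Hn * G = _\<close>)
  qed
  have f: "Hn * CSrhs j k h = Hn * G - Hj * A"
    unfolding Qk A_def Hn_def by (simp add: algebra_simps)
  show ?thesis
    unfolding c d unfolding Bt f HH_diff e by simp
qed

lemma Zeqs_tangent: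
  assumes Z: "\<And>m. CSrhs n m h = 0"
  shows "((\<lambda>e. Zeqs n (k, m) (\<lambda>a b. h a b + e * Xfield j h a b)) has_field_derivative 0) (at 0)"
proof -
  define A where "A = Hser h n * Hser h k"
  define Bt where "Bt = CSrhs j n h * Hser h k + Hser h n * CSrhs j k h"
  define Cc where "Cc = CSrhs j n h * CSrhs j k h"
  define Q where "Q = (\<lambda>m. CSrhs j m h)"
  have c1: "SS (n+k) Q A + HH (n+k) h Bt - Bt = 0"
    unfolding A_def Bt_def Q_def by (rule C1_zero[OF Z])
  have eq: "Zeqs n (k, m) (\<lambda>a b. h a b + e * Xfield j h a b) =
     fls_nth (HH (n+k) h A - A) m + e * 0 + e * (e * fls_nth (SS (n+k) Q Bt + HH (n+k) h Cc - Cc) m)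
     + e * (e * (e * fls_nth (SS (n+k) Q Cc) m))" for e
    unfolding Zeqs_def using expansion[where h=h and n=n and k=k and j=j and e=e] c1
    unfolding A_def[symmetric] Bt_def[symmetric] Cc_def[symmetric] Q_def[symmetric]
    by simp
  show ?thesis unfolding eq by (rule deriv_cubic)
qed

theorem mainTheorem5:
  fixes n :: nat
  assumes "1 \<le> n"
  shows "(\<forall>h \<in> Zset n. \<forall>j \<ge> 1. tangent_at j (Zeqs n) h)
       \<and> (\<forall>h \<in> Zset n. \<forall>j \<ge> 1. CSrhs j n h = 0)
       \<and> (\<forall>h \<in> Sset n. \<forall>j \<ge> 1. tangent_at j (Seqs n) h)"
proof (intro conjI ballI allI impI)
  fix h j assume h: "h \<in> Zset n"
  then have Z: "\<And>m. CSrhs n m h = 0" by (simp add: Zset_def)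
  show "tangent_at j (Zeqs n) h" unfolding tangent_at_def
    using Zeqs_tangent[OF Z] by auto
  show "CSrhs j n h = 0" using Z[of j] CS_sym[of j n h] by simp
next
  fix h j assume h: "h \<in> Sset n"
  then have Z: "\<And>m. CSrhs n m h = 0" by (simp add: Sset_def Zset_def)
  have Qn: "CSrhs j n h = 0" using Z[of j] CS_sym[of j n h] by simp
  show "tangent_at j (Seqs n) h" unfolding tangent_at_def
  proof
    fix x show "((\<lambda>e. Seqs n x (\<lambda>a b. h a b + e * Xfield j h a b)) has_field_derivative 0) (at 0)"
    proof (cases x)
      case (Inl km) then show ?thesis using Zeqs_tangent[OF Z] by (cases km) (simp add: Seqs_def)
    next
      case (Inr m) then show ?thesis by (simp add: Seqs_def Hser_pert Qn)
    qed
  qed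
qed

end
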